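(* Let $N\ge 1$ be an integer, $\rho,\alpha,q\in[0,1]$, and $(r_n)_{n\ge0}$ with $0\le r_n<1$. Let $Z_n(i)\in[0,1]$ ($i=1,\dots,N$, $n\ge 0$) evolve by $Z_{n+1}(i)=(1-r_n)Z_n(i)+r_n(\rho I_{n+1}(i)+(1-\rho)q)$, where, with $\mathcal F_n=\sigma(Z_k(i):\,1\le i\le N,\ 0\le k\le n)$ and $Z_n=\frac1N\sum_{i=1}^N Z_n(i)$, the $I_{n+1}(1),\dots,I_{n+1}(N)\in\{0,1\}$ are conditionally independent given $\mathcal F_n$ with $P(I_{n+1}(i)=1\mid\mathcal F_n)=(1-\alpha)Z_n(i)+\alpha Z_n$. Suppose $\sum_n r_n=+\infty$, $\sum_n r_n^2<+\infty$ and $\rho(1-\alpha)<1$. Then for every $i\in\{1,\dots,N\}$, $Z_n(i)-Z_n\to0$ almost surely. In particular, if $Z$ is the almost sure limit of $Z_n$, then $Z_n(i)\to Z$ almost surely for every $i$.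
   Context: The paper's standing assumption on the initial condition (permutation invariant law, $E[Z_0(i)]=1/2$, $E[Z_0(1-Z_0)]>0$) may also be imposed but is not needed for this result. *)

theory Defs
  imports "HOL-Probability.Probability"
begin

definition nat_filtr :: "'a measure \<Rightarrow> nat \<Rightarrow> (nat \<Rightarrow> nat \<Rightarrow> 'a \<Rightarrow> real) \<Rightarrow> nat \<Rightarrow> 'a measure" where
  "nat_filtr M N Z n = sigma (space M)
     {Z k i -` B \<inter> space M | k i B. k \<le> n \<and> i \<in> {1..N} \<and> B \<in> sets borel}"

definition cond_prob_given :: "'a measure \<Rightarrow> 'a measure \<Rightarrow> 'a set \<Rightarrow> 'a \<Rightarrow> real" where
  "cond_prob_given M F A = real_cond_exp M F (indicator A)"

definition cond_indep_vars :: "'a measure \<Rightarrow> 'a measure \<Rightarrow> 'i set \<Rightarrow> ('i \<Rightarrow> 'a \<Rightarrow> real) \<Rightarrow> bool" where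
  "cond_indep_vars M F S X \<longleftrightarrow>
     (\<forall>B. (\<forall>i\<in>S. B i \<in> sets borel) \<longrightarrow>
        (AE w in M. cond_prob_given M F (\<Inter>i\<in>S. X i -` B i \<inter> space M) w
                   = (\<Prod>i\<in>S. cond_prob_given M F (X i -` B i \<inter> space M) w)))"

end

theory Submission
  imports Defs
begin

lemma det_conv:
  fixes E u a :: "nat \<Rightarrow> real"
  assumes a: "\<And>n. 0 \<le> a n" "\<And>n. a n \<le> 1"
    and rec: "\<And>n. E (Suc n) = (1 - a n) * E n + a n * u n"
    and u: "u \<longlonglongrightarrow> 0"
    and div: "filterlim (\<lambda>n. \<Sum>k<n. a k) at_top sequentially"
  shows "E \<longlonglongrightarrow> 0"
proof (rule LIMSEQ_I)
  fix e :: real assume e: "0 < e"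
  define e2 where "e2 = e / 2"
  have e2: "0 < e2" using e by (simp add: e2_def)
  obtain n0 where n0: "\<And>n. n \<ge> n0 \<Longrightarrow> norm (u n) < e2"
    using LIMSEQ_D[OF u e2] by auto
  define h where "h n = max (\<bar>E n\<bar> - e2) 0" for n
  define C where "C = h n0"
  have step: "h (Suc n) \<le> (1 - a n) * h n" if "n \<ge> n0" for n
  proof -
    have "\<bar>E (Suc n)\<bar> \<le> (1 - a n) * \<bar>E n\<bar> + a n * \<bar>u n\<bar>"
      using a[of n] by (simp add: rec abs_mult) (metis abs_mult abs_of_nonneg abs_triangle_ineq diff_ge_0_iff_ge)
    also have "\<dots> \<le> (1 - a n) * \<bar>E n\<bar> + a n * e2"
      using n0[OF that] a[of n] by (intro add_left_mono mult_left_mono) auto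
    finally have "\<bar>E (Suc n)\<bar> - e2 \<le> (1 - a n) * (\<bar>E n\<bar> - e2)" by (simp add: algebra_simps)
    moreover have "(1 - a n) * (\<bar>E n\<bar> - e2) \<le> (1 - a n) * h n"
      using a[of n] by (intro mult_left_mono) (auto simp: h_def)
    moreover have "0 \<le> (1 - a n) * h n" using a[of n] by (auto simp: h_def)
    ultimately show ?thesis unfolding h_def by auto
  qed
  have bnd: "h (n0 + m) \<le> C * exp (- (\<Sum>k\<in>{n0..<n0+m}. a k))" for m
  proof (induction m)
    case 0 then show ?case by (simp add: C_def)
  next
    case (Suc m)
    have "h (n0 + Suc m) \<le> (1 - a (n0+m)) * h (n0 + m)" using step[of "n0+m"] by simp
    also have "\<dots> \<le> exp (- a (n0+m)) * (C * exp (- (\<Sum>k\<in>{n0..<n0+m}. a k)))"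
      using Suc.IH a[of "n0+m"] h_def
      by (intro mult_mono) (auto simp: h_def, smt (verit) exp_ge_add_one_self)
    also have "\<dots> = C * exp (- (\<Sum>k\<in>{n0..<n0+Suc m}. a k))"
      by (simp add: exp_add[symmetric] algebra_simps)
    finally show ?case .
  qed
  have "((\<lambda>m. C * exp (- (\<Sum>k\<in>{n0..<n0+m}. a k))) \<longlongrightarrow> C * 0) sequentially"
  proof (intro tendsto_mult tendsto_const)
    have eq: "(\<Sum>k\<in>{n0..<n0+m}. a k) = (\<Sum>k<n0+m. a k) - (\<Sum>k<n0. a k)" for m
      by (simp add: atLeast0LessThan[symmetric] sum.atLeastLessThan_concat[of 0 n0 "n0+m", symmetric])
    have "filterlim (\<lambda>m. \<Sum>k<n0+m. a k) at_top sequentially"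
      using filterlim_compose[OF div filterlim_add_const_nat_at_top[of n0]] by (simp add: add.commute)
    then have "filterlim (\<lambda>m. (\<Sum>k\<in>{n0..<n0+m}. a k)) at_top sequentially"
    proof -
      have fe: "(\<lambda>m. (\<Sum>k\<in>{n0..<n0+m}. a k)) = (\<lambda>m. - (\<Sum>k<n0. a k) + (\<Sum>k<n0+m. a k))"
        by (simp add: eq fun_eq_iff)
      show ?thesis unfolding fe
        by (rule filterlim_tendsto_add_at_top[OF tendsto_const]) fact
    qed
    then show "((\<lambda>m. exp (- (\<Sum>k\<in>{n0..<n0+m}. a k))) \<longlongrightarrow> 0) sequentially"
      by (simp add: filterlim_compose[OF exp_at_bot] filterlim_uminus_at_bot)
  qed
  then obtain m0 where m0: "\<And>m. m \<ge> m0 \<Longrightarrow> norm (C * exp (- (\<Sum>k\<in>{n0..<n0+m}. a k))) < e2"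
    using LIMSEQ_D[OF _ e2] by fastforce
  show "\<exists>no. \<forall>n\<ge>no. norm (E n - 0) < e"
  proof (intro exI allI impI)
    fix n assume n: "n \<ge> n0 + m0"
    then obtain m where m: "n = n0 + m" "m \<ge> m0" by (intro that[of "n - n0"]) auto
    have "h n < e2" using bnd[of m] m0[OF m(2)] m by auto
    then have "\<bar>E n\<bar> - e2 < e2" unfolding h_def by linarith
    then show "norm (E n - 0) < e" by (simp add: e2_def)
  qed
qed

lemma det_conv2:
  fixes D x a :: "nat \<Rightarrow> real"
  assumes a: "\<And>n. 0 \<le> a n" "\<And>n. a n \<le> 1"
    and rec: "\<And>n. D (Suc n) = (1 - a n) * D n + x n"
    and x: "summable x"
    and div: "filterlim (\<lambda>n. \<Sum>k<n. a k) at_top sequentially"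
  shows "D \<longlonglongrightarrow> 0"
proof -
  define T where "T k = (\<Sum>j. x (j + k))" for k
  have T: "T k = suminf x - (\<Sum>i<k. x i)" for k
    using suminf_split_initial_segment[OF x, of k] by (simp add: T_def)
  have "(\<lambda>k. suminf x - (\<Sum>i<k. x i)) \<longlonglongrightarrow> suminf x - suminf x"
    by (intro tendsto_diff tendsto_const summable_LIMSEQ x)
  then have Tl: "T \<longlonglongrightarrow> 0" unfolding T by simp
  have Ts: "T k = x k + T (Suc k)" for k by (simp add: T)
  define E where "E n = D n + T n" for n
  have "E \<longlonglongrightarrow> 0"
  proof (rule det_conv[OF a])
    show "E (Suc n) = (1 - a n) * E n + a n * T n" for n
      by (simp add: E_def rec Ts[of n] algebra_simps)
  qed (use Tl div in auto)
  then have "(\<lambda>n. E n - T n) \<longlonglongrightarrow> 0 - 0" using Tl by (intro tendsto_diff)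
  then show ?thesis by (simp add: E_def)
qed

lemma (in prob_space) bint:
  fixes f :: "'a \<Rightarrow> real"
  assumes "f \<in> borel_measurable M" "\<And>w. w \<in> space M \<Longrightarrow> \<bar>f w\<bar> \<le> B"
  shows "integrable M f"
  by (rule integrable_const_bound[where B=B]) (use assms in \<open>auto intro: AE_I2\<close>)

lemma sq_le: "\<bar>a::real\<bar> \<le> B \<Longrightarrow> a\<^sup>2 \<le> B\<^sup>2"
  by (metis abs_ge_zero power2_abs power_mono)

lemma as_summable:
  fixes M :: "'a measure" and G :: "nat \<Rightarrow> 'a measure" and x :: "nat \<Rightarrow> 'a \<Rightarrow> real"
    and b :: "nat \<Rightarrow> real"
  assumes P: "prob_space M"
    and G_sub: "\<And>n. subalgebra M (G n)"
    and G_mono: "\<And>n m. n \<le> m \<Longrightarrow> subalgebra (G m) (G n)"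
    and x_meas: "\<And>n. x n \<in> borel_measurable (G (Suc n))"
    and x_bnd: "\<And>n w. w \<in> space M \<Longrightarrow> \<bar>x n w\<bar> \<le> b n"
    and b: "summable (\<lambda>n. (b n)\<^sup>2)"
    and orth: "\<And>n g B. g \<in> borel_measurable (G n) \<Longrightarrow> (\<And>w. w \<in> space M \<Longrightarrow> \<bar>g w\<bar> \<le> B)
                 \<Longrightarrow> (\<integral>w. g w * x n w \<partial>M) = 0"
  shows "AE w in M. summable (\<lambda>n. x n w)"
proof -
  interpret prob_space M by (rule P)
  have spG: "space (G n) = space M" for n using G_sub[of n] by (simp add: subalgebra_def)
  have xM[measurable]: "x n \<in> borel_measurable M" for n
    by (rule measurable_from_subalg[OF G_sub x_meas])
  define S where "S k m w = (\<Sum>j\<in>{k..<m}. x j w)" for k m w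
  define SB where "SB k m = (\<Sum>j\<in>{k..<m}. b j)" for k m
  have SG: "S k m \<in> borel_measurable (G m)" for k m
    unfolding S_def
  proof (rule borel_measurable_sum)
    fix j assume "j \<in> {k..<m}"
    then have "Suc j \<le> m" by auto
    then show "x j \<in> borel_measurable (G m)"
      by (rule measurable_from_subalg[OF G_mono x_meas])
  qed
  have SGj: "S k m \<in> borel_measurable (G j)" if "m \<le> j" for k m j
    by (rule measurable_from_subalg[OF G_mono[OF that] SG])
  have SM[measurable]: "S k m \<in> borel_measurable M" for k m
    by (rule measurable_from_subalg[OF G_sub SG])
  have Sbnd: "\<bar>S k m w\<bar> \<le> SB k m" if "w \<in> space M" for k m w
    unfolding S_def SB_def
    by (rule order_trans[OF sum_abs sum_mono]) (use x_bnd[OF that] in auto)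
  have b0: "0 \<le> b n" for n
  proof -
    obtain w where "w \<in> space M" using not_empty by blast
    then show ?thesis using x_bnd[of w n] by linarith
  qed
  have SB0: "0 \<le> SB k m" for k m unfolding SB_def by (intro sum_nonneg b0)
  have xsq: "(\<integral>w. (x j w)\<^sup>2 \<partial>M) \<le> (b j)\<^sup>2" for j
  proof -
    have "(\<integral>w. (x j w)\<^sup>2 \<partial>M) \<le> (\<integral>w. (b j)\<^sup>2 \<partial>M)"
    proof (rule integral_mono)
      show "integrable M (\<lambda>w. (x j w)\<^sup>2)"
        by (rule bint[where B="(b j)^2"]) (auto intro!: sq_le x_bnd)
    qed (auto intro!: sq_le x_bnd)
    then show ?thesis by (simp add: prob_space)
  qed
  have C1: "(\<integral>w. (S k m w)\<^sup>2 \<partial>M) = (\<Sum>j\<in>{k..<m}. \<integral>w. (x j w)\<^sup>2 \<partial>M)" if "k \<le> m" for k m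
    using that
  proof (induction m rule: dec_induct)
    case base then show ?case by (simp add: S_def)
  next
    case (step n)
    have Sn: "S k (Suc n) w = S k n w + x n w" for w
      using step(1) by (simp add: S_def)
    have i1: "integrable M (\<lambda>w. (S k n w)\<^sup>2)"
      by (rule bint[where B="(SB k n)^2"]) (auto intro!: sq_le Sbnd)
    have i2: "integrable M (\<lambda>w. S k n w * x n w)"
      by (rule bint[where B="SB k n * b n"]) (auto simp: abs_mult intro!: mult_mono Sbnd x_bnd b0 SB0)
    have i3: "integrable M (\<lambda>w. (x n w)\<^sup>2)"
      by (rule bint[where B="(b n)^2"]) (auto intro!: sq_le x_bnd)
    have o: "(\<integral>w. S k n w * x n w \<partial>M) = 0"
      by (rule orth[OF SG Sbnd])
    have "(\<integral>w. (S k (Suc n) w)\<^sup>2 \<partial>M) = (\<integral>w. (S k n w)\<^sup>2 + 2 * (S k n w * x n w) + (x n w)\<^sup>2 \<partial>M)"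
      by (simp add: Sn power2_sum algebra_simps)
    also have "\<dots> = (\<integral>w. (S k n w)\<^sup>2 \<partial>M) + 2 * (\<integral>w. S k n w * x n w \<partial>M) + (\<integral>w. (x n w)\<^sup>2 \<partial>M)"
      using i1 i2 i3 by simp
    also have "\<dots> = (\<Sum>j\<in>{k..<Suc n}. \<integral>w. (x j w)\<^sup>2 \<partial>M)"
      using step o by simp
    finally show ?case .
  qed
  have C2: "l\<^sup>2 * prob {w \<in> space M. \<exists>m\<in>{k..n}. l \<le> \<bar>S k m w\<bar>} \<le> (\<integral>w. (S k n w)\<^sup>2 \<partial>M)"
    if kn: "k \<le> n" and l: "0 < l" for k n l
  proof -
    define A where "A m = {w \<in> space M. l \<le> \<bar>S k m w\<bar> \<and> (\<forall>j\<in>{k..<m}. \<bar>S k j w\<bar> < l)}" for m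
    have AG: "A m \<in> sets (G m)" for m
    proof -
      have "{w \<in> space (G m). l \<le> \<bar>S k m w\<bar> \<and> (\<forall>j\<in>{k..<m}. \<bar>S k j w\<bar> < l)} \<in> sets (G m)"
      proof -
        have "{w \<in> space (G m). l \<le> \<bar>S k m w\<bar>} = (\<lambda>w. \<bar>S k m w\<bar>) -` {l..} \<inter> space (G m)" by auto
        also have "\<dots> \<in> sets (G m)" by (intro measurable_sets[OF borel_measurable_abs[OF SG]]) auto
        finally have "{w \<in> space (G m). l \<le> \<bar>S k m w\<bar>} \<in> sets (G m)" .
        moreover have "{w \<in> space (G m). \<bar>S k j w\<bar> < l} \<in> sets (G m)" if "j \<in> {k..<m}" for j
        proof -
          have "{w \<in> space (G m). \<bar>S k j w\<bar> < l} = (\<lambda>w. \<bar>S k j w\<bar>) -` {..<l} \<inter> space (G m)" by auto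
          also have "\<dots> \<in> sets (G m)" using that by (intro measurable_sets[OF borel_measurable_abs[OF SGj]]) auto
          finally show ?thesis .
        qed
        ultimately have "{w \<in> space (G m). l \<le> \<bar>S k m w\<bar>} \<inter> (\<Inter>j\<in>{k..<m}. {w \<in> space (G m). \<bar>S k j w\<bar> < l}) \<in> sets (G m)"
          by (cases "k < m") (auto intro!: sets.Int sets.finite_INT)
        moreover have "{w \<in> space (G m). l \<le> \<bar>S k m w\<bar>} \<inter> (\<Inter>j\<in>{k..<m}. {w \<in> space (G m). \<bar>S k j w\<bar> < l})
            = {w \<in> space (G m). l \<le> \<bar>S k m w\<bar> \<and> (\<forall>j\<in>{k..<m}. \<bar>S k j w\<bar> < l)}"
          by auto
        ultimately show ?thesis by simp
      qed
      then show ?thesis by (simp add: A_def spG)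
    qed
    have AM: "A m \<in> sets M" for m using AG[of m] G_sub[of m] by (auto simp: subalgebra_def)
    have ev_sub: "{w \<in> space M. \<exists>m\<in>{k..n}. l \<le> \<bar>S k m w\<bar>} \<subseteq> (\<Union>m\<in>{k..n}. A m)"
    proof
      fix w assume w: "w \<in> {w \<in> space M. \<exists>m\<in>{k..n}. l \<le> \<bar>S k m w\<bar>}"
      define m where "m = (LEAST m. m \<in> {k..n} \<and> l \<le> \<bar>S k m w\<bar>)"
      have m: "m \<in> {k..n} \<and> l \<le> \<bar>S k m w\<bar>"
      proof -
        obtain m' where "m' \<in> {k..n} \<and> l \<le> \<bar>S k m' w\<bar>" using w by blast
        then show ?thesis unfolding m_def by (rule LeastI)
      qed
      have "\<bar>S k j w\<bar> < l" if "j \<in> {k..<m}" for j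
      proof (rule ccontr)
        assume "\<not> \<bar>S k j w\<bar> < l"
        then have "m \<le> j" unfolding m_def using that m by (intro Least_le) auto
        then show False using that by auto
      qed
      then show "w \<in> (\<Union>m\<in>{k..n}. A m)" using m w by (auto simp: A_def)
    qed
    have disj: "\<not> (w \<in> A m1 \<and> w \<in> A m2)" if "m1 < m2" "k \<le> m1" for w m1 m2
    proof
      assume h: "w \<in> A m1 \<and> w \<in> A m2"
      then have "\<bar>S k m1 w\<bar> < l" using that unfolding A_def by auto
      moreover have "l \<le> \<bar>S k m1 w\<bar>" using h unfolding A_def by auto
      ultimately show False by simp
    qed
    have ind_sum: "(\<Sum>m\<in>{k..n}. indicator (A m) w) \<le> (1::real)" for w
    proof (cases "\<exists>m0\<in>{k..n}. w \<in> A m0")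
      case True
      then obtain m0 where m0: "m0 \<in> {k..n}" "w \<in> A m0" by blast
      have "(\<Sum>m\<in>{k..n}. indicator (A m) w) = (\<Sum>m\<in>{k..n}. if m = m0 then 1 else (0::real))"
      proof (rule sum.cong)
        fix m assume "m \<in> {k..n}"
        show "indicator (A m) w = (if m = m0 then 1 else (0::real))"
          using disj[of m m0 w] disj[of m0 m w] m0 \<open>m \<in> {k..n}\<close>
          by (cases "m = m0") (auto simp: indicator_def, meson linorder_neqE_nat)
      qed simp
      also have "\<dots> = 1" using m0 by simp
      finally show ?thesis by simp
    next
      case False
      then show ?thesis by (simp add: indicator_def)
    qed
    have ASn: "l\<^sup>2 * prob (A m) \<le> (\<integral>w. indicator (A m) w * (S k n w)\<^sup>2 \<partial>M)" if m: "m \<in> {k..n}" for m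
    proof -
      define g where "g w = indicator (A m) w * S k m w" for w
      have gG: "g \<in> borel_measurable (G j)" if "m \<le> j" for j
        unfolding g_def
        by (intro borel_measurable_times measurable_from_subalg[OF G_mono[OF that]] borel_measurable_indicator AG SG)
      have gb: "\<bar>g w\<bar> \<le> SB k m" if "w \<in> space M" for w
        using Sbnd[OF that, of k m] by (auto simp: g_def indicator_def)
      have gM: "g \<in> borel_measurable M" using measurable_from_subalg[OF G_sub gG[of m]] by simp
      define R where "R w = S m n w" for w
      have RM: "R \<in> borel_measurable M" unfolding R_def by simp
      have Rb: "\<bar>R w\<bar> \<le> SB m n" if "w \<in> space M" for w using Sbnd[OF that] by (simp add: R_def)
      have split: "S k n w = S k m w + R w" for w
        unfolding S_def R_def using m by (simp add: sum.atLeastLessThan_concat)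
      have gR: "(\<integral>w. g w * R w \<partial>M) = 0"
      proof -
        have "(\<integral>w. g w * R w \<partial>M) = (\<integral>w. (\<Sum>j\<in>{m..<n}. g w * x j w) \<partial>M)"
          by (simp add: R_def S_def sum_distrib_left)
        also have "\<dots> = (\<Sum>j\<in>{m..<n}. \<integral>w. g w * x j w \<partial>M)"
        proof (rule Bochner_Integration.integral_sum[where f="\<lambda>j w. g w * x j w"])
          fix j show "integrable M (\<lambda>w. g w * x j w)"
            by (rule bint[where B="SB k m * b j"]) (use gM in simp,
              auto simp: abs_mult intro!: mult_mono gb x_bnd b0 SB0)
        qed
        also have "\<dots> = 0"
          by (rule sum.neutral) (auto intro!: orth[OF gG gb])
        finally show ?thesis .
      qed
      have iA: "integrable M (\<lambda>w. indicator (A m) w * (S k n w)\<^sup>2)"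
        by (rule bint[where B="(SB k n)^2"]) (use AM in simp,
            auto simp: indicator_def intro!: sq_le Sbnd)
      have iI: "integrable M (indicator (A m) :: 'a \<Rightarrow> real)"
        by (rule bint[where B=1]) (use AM in \<open>auto simp: indicator_def\<close>)
      have "l\<^sup>2 * prob (A m) = (\<integral>w. indicator (A m) w * l\<^sup>2 \<partial>M)"
        using AM iI by simp
      also have "\<dots> \<le> (\<integral>w. indicator (A m) w * (S k m w)\<^sup>2 + indicator (A m) w * (R w)\<^sup>2 \<partial>M)"
      proof (rule integral_mono)
        show "integrable M (\<lambda>w. indicator (A m) w * l\<^sup>2)" using iI by simp
        show "integrable M (\<lambda>w. indicator (A m) w * (S k m w)\<^sup>2 + indicator (A m) w * (R w)\<^sup>2)"
          by (rule bint[where B="(SB k m)^2 + (SB m n)^2"]) (use AM RM in simp,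
            auto simp: indicator_def intro!: add_mono sq_le Sbnd Rb)
        fix w assume "w \<in> space M"
        have "indicator (A m) w * l\<^sup>2 \<le> indicator (A m) w * (S k m w)\<^sup>2"
          using l by (auto simp: indicator_def A_def abs_le_square_iff[symmetric])
        then show "indicator (A m) w * l\<^sup>2 \<le> indicator (A m) w * (S k m w)\<^sup>2 + indicator (A m) w * (R w)\<^sup>2"
          by (cases "w \<in> A m") (auto simp: indicator_def intro: add_increasing2)
      qed
      also have "\<dots> = (\<integral>w. indicator (A m) w * (S k m w)\<^sup>2 + indicator (A m) w * (R w)\<^sup>2 \<partial>M) + 2 * (\<integral>w. g w * R w \<partial>M)"
        using gR by simp
      also have "\<dots> = (\<integral>w. (indicator (A m) w * (S k m w)\<^sup>2 + indicator (A m) w * (R w)\<^sup>2) + 2 * (g w * R w) \<partial>M)"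
      proof -
        have i1: "integrable M (\<lambda>w. indicator (A m) w * (S k m w)\<^sup>2 + indicator (A m) w * (R w)\<^sup>2)"
          by (rule bint[where B="(SB k m)^2 + (SB m n)^2"]) (use AM RM in simp,
            auto simp: indicator_def intro!: add_mono sq_le Sbnd Rb)
        have i2: "integrable M (\<lambda>w. g w * R w)"
          by (rule bint[where B="SB k m * SB m n"]) (use gM RM in simp,
            auto simp: abs_mult intro!: mult_mono gb Rb SB0)
        show ?thesis using i1 i2 by simp
      qed
      also have "\<dots> = (\<integral>w. indicator (A m) w * (S k n w)\<^sup>2 \<partial>M)"
        by (rule Bochner_Integration.integral_cong) (auto simp: split g_def power2_sum algebra_simps)
      finally show ?thesis .
    qed
    have evM: "{w \<in> space M. \<exists>m\<in>{k..n}. l \<le> \<bar>S k m w\<bar>} \<in> sets M" by measurable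
    have "prob {w \<in> space M. \<exists>m\<in>{k..n}. l \<le> \<bar>S k m w\<bar>} \<le> prob (\<Union>m\<in>{k..n}. A m)"
      by (rule finite_measure_mono[OF ev_sub]) (auto intro: AM)
    also have "\<dots> \<le> (\<Sum>m\<in>{k..n}. prob (A m))"
      by (rule finite_measure_subadditive_finite) (auto intro: AM)
    finally have "l\<^sup>2 * prob {w \<in> space M. \<exists>m\<in>{k..n}. l \<le> \<bar>S k m w\<bar>} \<le> (\<Sum>m\<in>{k..n}. l\<^sup>2 * prob (A m))"
      unfolding sum_distrib_left[symmetric] by (rule mult_left_mono) auto
    also have "\<dots> \<le> (\<Sum>m\<in>{k..n}. \<integral>w. indicator (A m) w * (S k n w)\<^sup>2 \<partial>M)"
      by (rule sum_mono) (rule ASn)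
    also have "\<dots> = (\<integral>w. (\<Sum>m\<in>{k..n}. indicator (A m) w) * (S k n w)\<^sup>2 \<partial>M)"
      unfolding sum_distrib_right
    proof (rule Bochner_Integration.integral_sum[where f="\<lambda>m w. indicator (A m) w * (S k n w)\<^sup>2", symmetric])
      fix m show "integrable M (\<lambda>w. indicator (A m) w * (S k n w)\<^sup>2)"
        by (rule bint[where B="(SB k n)^2"]) (use AM in simp,
            auto simp: indicator_def intro!: sq_le Sbnd)
    qed
    also have "\<dots> \<le> (\<integral>w. (S k n w)\<^sup>2 \<partial>M)"
    proof (rule integral_mono)
      show "integrable M (\<lambda>w. (\<Sum>m\<in>{k..n}. indicator (A m) w) * (S k n w)\<^sup>2)"
      proof (rule bint[where B="(SB k n)^2"])
        show "(\<lambda>w. (\<Sum>m\<in>{k..n}. indicator (A m) w) * (S k n w)\<^sup>2) \<in> borel_measurable M"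
          using AM by simp
        fix w assume w: "w \<in> space M"
        have s0: "0 \<le> (\<Sum>m\<in>{k..n}. indicator (A m) w :: real)" by (intro sum_nonneg) auto
        have "\<bar>(\<Sum>m\<in>{k..n}. indicator (A m) w) * (S k n w)\<^sup>2\<bar> = (\<Sum>m\<in>{k..n}. indicator (A m) w) * (S k n w)\<^sup>2"
          using s0 by (simp add: abs_mult)
        also have "\<dots> \<le> 1 * (SB k n)\<^sup>2"
          by (intro mult_mono ind_sum sq_le Sbnd w) auto
        finally show "\<bar>(\<Sum>m\<in>{k..n}. indicator (A m) w) * (S k n w)\<^sup>2\<bar> \<le> (SB k n)\<^sup>2" by simp
      qed
      show "integrable M (\<lambda>w. (S k n w)\<^sup>2)"
        by (rule bint[where B="(SB k n)^2"]) (auto intro!: sq_le Sbnd)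
      fix w assume "w \<in> space M"
      show "(\<Sum>m\<in>{k..n}. indicator (A m) w) * (S k n w)\<^sup>2 \<le> (S k n w)\<^sup>2"
        using ind_sum[of w] by (intro mult_left_le_one_le) (auto intro: sum_nonneg)
    qed
    finally show ?thesis .
  qed
  define tl where "tl k = (\<Sum>j. (b (j + k))\<^sup>2)" for k
  have tl_lim: "tl \<longlonglongrightarrow> 0"
  proof -
    have "(\<lambda>k. suminf (\<lambda>j. (b j)\<^sup>2) - (\<Sum>i<k. (b i)\<^sup>2)) \<longlonglongrightarrow> suminf (\<lambda>j. (b j)\<^sup>2) - suminf (\<lambda>j. (b j)\<^sup>2)"
      by (intro tendsto_diff tendsto_const summable_LIMSEQ b)
    moreover have "tl = (\<lambda>k. suminf (\<lambda>j. (b j)\<^sup>2) - (\<Sum>i<k. (b i)\<^sup>2))"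
    proof (rule ext)
      fix k show "tl k = suminf (\<lambda>j. (b j)\<^sup>2) - (\<Sum>i<k. (b i)\<^sup>2)"
        using suminf_split_initial_segment[OF b, of k] unfolding tl_def by linarith
    qed
    ultimately show ?thesis by simp
  qed
  have C3: "prob {w \<in> space M. \<exists>m\<ge>k. l \<le> \<bar>S k m w\<bar>} \<le> tl k / l\<^sup>2" if l: "0 < l" for k l
  proof -
    define U where "U n = {w \<in> space M. \<exists>m\<in>{k..k+n}. l \<le> \<bar>S k m w\<bar>}" for n
    have "U n \<in> sets M" for n unfolding U_def by measurable
    then have UM: "range U \<subseteq> sets M" by auto
    have inc: "incseq U" unfolding incseq_def U_def by force
    have Un: "(\<Union>(range U)) = {w \<in> space M. \<exists>m\<ge>k. l \<le> \<bar>S k m w\<bar>}"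
      unfolding U_def by (auto, metis add.commute atLeastAtMost_iff le_add_diff_inverse order_refl)
    have lim: "(\<lambda>n. prob (U n)) \<longlonglongrightarrow> prob {w \<in> space M. \<exists>m\<ge>k. l \<le> \<bar>S k m w\<bar>}"
      using finite_Lim_measure_incseq[OF UM inc] unfolding Un .
    have "prob (U n) \<le> tl k / l\<^sup>2" for n
    proof -
      have "l\<^sup>2 * prob (U n) \<le> (\<integral>w. (S k (k+n) w)\<^sup>2 \<partial>M)"
        unfolding U_def by (rule C2[OF _ l]) simp
      also have "\<dots> = (\<Sum>j\<in>{k..<k+n}. \<integral>w. (x j w)\<^sup>2 \<partial>M)" by (rule C1) simp
      also have "\<dots> \<le> (\<Sum>j\<in>{k..<k+n}. (b j)\<^sup>2)" by (rule sum_mono) (rule xsq)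
      also have "\<dots> = (\<Sum>j<n. (b (j + k))\<^sup>2)"
        using sum.shift_bounds_nat_ivl[of "\<lambda>j. (b j)\<^sup>2" 0 k n] by (simp add: add.commute atLeast0LessThan)
      also have "\<dots> \<le> tl k" unfolding tl_def
        by (rule sum_le_suminf) (auto intro: summable_ignore_initial_segment[OF b])
      finally show ?thesis using l by (simp add: field_simps)
    qed
    then show ?thesis using lim by (intro LIMSEQ_le_const2[OF lim]) auto
  qed
  have null: "AE w in M. \<not> (\<forall>k. \<exists>m\<ge>k. 1 / real (Suc p) \<le> \<bar>S k m w\<bar>)" for p
  proof -
    define B where "B = {w \<in> space M. \<forall>k. \<exists>m\<ge>k. 1 / real (Suc p) \<le> \<bar>S k m w\<bar>}"
    have BM: "B \<in> sets M" unfolding B_def by measurable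
    have "prob B \<le> tl k / (1 / real (Suc p))\<^sup>2" for k
      by (rule order_trans[OF finite_measure_mono C3]) (auto simp: B_def)
    then have "prob B \<le> 0 / (1 / real (Suc p))\<^sup>2"
      by (intro LIMSEQ_le_const[OF tendsto_divide[OF tl_lim tendsto_const]]) auto
    then have "prob B = 0" using measure_nonneg[of M B] by simp
    then have "B \<in> null_sets M" using BM by (simp add: emeasure_eq_measure null_sets_def)
    then have "AE w in M. w \<notin> B" by (rule AE_not_in)
    then show ?thesis by (rule AE_mp) (auto simp: B_def intro!: AE_I2)
  qed
  have "AE w in M. \<forall>p. \<not> (\<forall>k. \<exists>m\<ge>k. 1 / real (Suc p) \<le> \<bar>S k m w\<bar>)"
    using null by (simp only: AE_all_countable) auto
  then show ?thesis
  proof (rule AE_mp, intro AE_I2 impI)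
    fix w assume H: "\<forall>p. \<not> (\<forall>k. \<exists>m\<ge>k. 1 / real (Suc p) \<le> \<bar>S k m w\<bar>)"
    show "summable (\<lambda>n. x n w)"
      unfolding summable_Cauchy
    proof (intro allI impI)
      fix e :: real assume e: "0 < e"
      obtain p where p: "1 / real (Suc p) < e / 2"
        using e by (metis half_gt_zero_iff nat_approx_posE)
      have "\<exists>k. \<forall>m. m < k \<or> \<bar>S k m w\<bar> < 1 / real (Suc p)"
        using H[rule_format, of p] by (simp add: not_le del: of_nat_Suc)
      then obtain k where kk: "\<forall>m. m < k \<or> \<bar>S k m w\<bar> < 1 / real (Suc p)"
        by blast
      have k: "\<bar>S k m w\<bar> < 1 / real (Suc p)" if "m \<ge> k" for m
        using kk[rule_format, of m] that by linarith
      show "\<exists>N. \<forall>m\<ge>N. \<forall>n. norm (sum (\<lambda>n. x n w) {m..<n}) < e"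
      proof (intro exI allI impI)
        fix m n assume m: "k \<le> m"
        show "norm (sum (\<lambda>n. x n w) {m..<n}) < e"
        proof (cases "m \<le> n")
          case True
          have "S k n w = S k m w + sum (\<lambda>n. x n w) {m..<n}"
            unfolding S_def using m True by (simp add: sum.atLeastLessThan_concat)
          moreover have "\<bar>S k n w\<bar> < 1 / real (Suc p)" "\<bar>S k m w\<bar> < 1 / real (Suc p)"
            using k[of n] k[of m] m True by auto
          ultimately show ?thesis unfolding real_norm_def using p by linarith
        next
          case False then show ?thesis using e by simp
        qed
      qed
    qed
  qed
qed

theorem theorem2p3:
  fixes M :: "'a measure" and N :: nat and \<rho> \<alpha> q :: real
    and r :: "nat \<Rightarrow> real"
    and Z :: "nat \<Rightarrow> nat \<Rightarrow> 'a \<Rightarrow> real"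
    and I :: "nat \<Rightarrow> nat \<Rightarrow> 'a \<Rightarrow> real"
  defines "Zbar \<equiv> (\<lambda>n w. (1 / real N) * (\<Sum>i=1..N. Z n i w))"
  defines "F \<equiv> nat_filtr M N Z"
  assumes M: "prob_space M"
    and N: "N \<ge> 1"
    and \<rho>: "0 \<le> \<rho>" "\<rho> \<le> 1" and \<alpha>: "0 \<le> \<alpha>" "\<alpha> \<le> 1" and q: "0 \<le> q" "q \<le> 1"
    and r: "\<And>n. 0 \<le> r n" "\<And>n. r n < 1"
    and Z_meas: "\<And>n i. i \<in> {1..N} \<Longrightarrow> Z n i \<in> borel_measurable M"
    and Z_range: "\<And>n i w. i \<in> {1..N} \<Longrightarrow> w \<in> space M \<Longrightarrow> Z n i w \<in> {0..1}"
    and I_meas: "\<And>n i. i \<in> {1..N} \<Longrightarrow> I n i \<in> borel_measurable M"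
    and I_range: "\<And>n i w. i \<in> {1..N} \<Longrightarrow> w \<in> space M \<Longrightarrow> I n i w \<in> {0, 1}"
    and recursion: "\<And>n i w. i \<in> {1..N} \<Longrightarrow> w \<in> space M \<Longrightarrow>
          Z (Suc n) i w = (1 - r n) * Z n i w + r n * (\<rho> * I (Suc n) i w + (1 - \<rho>) * q)"
    and I_cond_indep: "\<And>n. cond_indep_vars M (F n) {1..N} (I (Suc n))"
    and I_cond_prob_given: "\<And>n i. i \<in> {1..N} \<Longrightarrow>
          AE w in M. cond_prob_given M (F n) {w \<in> space M. I (Suc n) i w = 1} w
                     = (1 - \<alpha>) * Z n i w + \<alpha> * Zbar n w"
    and r_div: "filterlim (\<lambda>n. \<Sum>k<n. r k) at_top sequentially"
    and r_sq: "summable (\<lambda>n. (r n)\<^sup>2)"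
    and \<rho>\<alpha>: "\<rho> * (1 - \<alpha>) < 1"
  shows "(\<forall>i\<in>{1..N}. AE w in M. (\<lambda>n. Z n i w - Zbar n w) \<longlonglongrightarrow> 0)
       \<and> (\<forall>Zlim :: 'a \<Rightarrow> real. (AE w in M. (\<lambda>n. Zbar n w) \<longlonglongrightarrow> Zlim w) \<longrightarrow>
            (\<forall>i\<in>{1..N}. AE w in M. (\<lambda>n. Z n i w) \<longlonglongrightarrow> Zlim w))"
proof -
  interpret prob_space M by (rule M)
  define c where "c = 1 - \<rho> * (1 - \<alpha>)"
  have c: "0 < c" "c \<le> 1" using \<rho>\<alpha> \<rho> \<alpha> by (auto simp: c_def)
  have Npos: "real N > 0" using N by simp
  define Gen where "Gen n = {Z k i -` B \<inter> space M | k i B. k \<le> n \<and> i \<in> {1..N} \<and> B \<in> sets borel}" for n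
  have Fdef: "F n = sigma (space M) (Gen n)" for n by (simp add: F_def nat_filtr_def Gen_def)
  have GenP: "Gen n \<subseteq> Pow (space M)" for n by (auto simp: Gen_def)
  have GenM: "Gen n \<subseteq> sets M" for n
    using Z_meas by (auto simp: Gen_def intro!: measurable_sets)
  have spF: "space (F n) = space M" for n by (simp add: Fdef space_measure_of_conv)
  have setsF: "sets (F n) = sigma_sets (space M) (Gen n)" for n
    by (simp add: Fdef sets_measure_of[OF GenP])
  have subF: "subalgebra M (F n)" for n
    unfolding subalgebra_def using sets.sigma_sets_subset[OF GenM] by (simp add: setsF spF)
  have monoF: "subalgebra (F m) (F n)" if "n \<le> m" for n m
  proof -
    have "Gen n \<subseteq> Gen m" using that unfolding Gen_def by (force intro: le_trans)
    then have "sigma_sets (space M) (Gen n) \<subseteq> sigma_sets (space M) (Gen m)"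
      by (rule sigma_sets_mono')
    then show ?thesis unfolding subalgebra_def by (simp add: setsF spF)
  qed
  have sfs: "sigma_finite_subalgebra M (F n)" for n
    by (rule finite_measure_subalgebra_is_sigma_finite) (unfold_locales, rule subF)
  have ZF: "Z k j \<in> borel_measurable (F n)" if "k \<le> n" "j \<in> {1..N}" for k j n
  proof (rule measurableI)
    fix B :: "real set" assume "B \<in> sets borel"
    then have "Z k j -` B \<inter> space M \<in> Gen n" using that unfolding Gen_def by blast
    then show "Z k j -` B \<inter> space (F n) \<in> sets (F n)" by (simp add: setsF spF)
  qed simp
  have ZbF: "Zbar k \<in> borel_measurable (F n)" if "k \<le> n" for k n
    unfolding Zbar_def by (intro borel_measurable_times borel_measurable_const borel_measurable_sum ZF that) auto
  have ZbM[measurable]: "Zbar k \<in> borel_measurable M" for k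
    by (rule measurable_from_subalg[OF subF ZbF[of k k]]) simp
  have Zb_range: "0 \<le> Zbar n w \<and> Zbar n w \<le> 1" if "w \<in> space M" for n w
  proof -
    have "(\<Sum>i=1..N. Z n i w) \<le> (\<Sum>i=1..N. 1)" by (rule sum_mono) (use Z_range[OF _ that] in auto)
    moreover have "0 \<le> (\<Sum>i=1..N. Z n i w)" by (rule sum_nonneg) (use Z_range[OF _ that] in auto)
    ultimately show ?thesis using Npos by (auto simp: Zbar_def field_simps)
  qed
  define h where "h n j w = I (Suc n) j w - ((1 - \<alpha>) * Z n j w + \<alpha> * Zbar n w)" for n j w
  define Ib where "Ib n w = (1 / real N) * (\<Sum>j=1..N. I (Suc n) j w)" for n w
  have ZbS: "Zbar (Suc n) w = (1 - r n) * Zbar n w + r n * (\<rho> * Ib n w + (1 - \<rho>) * q)"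
    if w: "w \<in> space M" for n w
  proof -
    have "(\<Sum>j=1..N. Z (Suc n) j w) = (\<Sum>j=1..N. (1 - r n) * Z n j w + r n * \<rho> * I (Suc n) j w + r n * (1 - \<rho>) * q)"
      by (rule sum.cong) (auto simp: recursion[OF _ w] algebra_simps)
    also have "\<dots> = (1 - r n) * (\<Sum>j=1..N. Z n j w) + r n * \<rho> * (\<Sum>j=1..N. I (Suc n) j w) + real N * (r n * (1 - \<rho>) * q)"
      by (simp add: sum.distrib sum_distrib_left)
    finally have eq: "(\<Sum>j=1..N. Z (Suc n) j w) = (1 - r n) * (\<Sum>j=1..N. Z n j w) + r n * \<rho> * (\<Sum>j=1..N. I (Suc n) j w) + real N * (r n * (1 - \<rho>) * q)" .
    show ?thesis unfolding Zbar_def Ib_def eq using Npos by (simp add: field_simps)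
  qed
  have havg: "(1 / real N) * (\<Sum>j=1..N. h n j w) = Ib n w - Zbar n w" for n w
  proof -
    have "(\<Sum>j=1..N. h n j w) = (\<Sum>j=1..N. I (Suc n) j w) - (1 - \<alpha>) * (\<Sum>j=1..N. Z n j w) - real N * (\<alpha> * Zbar n w)"
      by (simp add: h_def sum_subtractf sum.distrib sum_distrib_left)
    then show ?thesis using Npos unfolding Zbar_def Ib_def by (simp add: field_simps)
  qed
  have brr: "0 \<le> (1 - \<alpha>) * Z n j w + \<alpha> * Zbar n w \<and> (1 - \<alpha>) * Z n j w + \<alpha> * Zbar n w \<le> 1"
    if "j \<in> {1..N}" "w \<in> space M" for n j w
  proof
    have z: "0 \<le> Z n j w" "Z n j w \<le> 1" using Z_range[OF that] by auto
    have zb: "0 \<le> Zbar n w" "Zbar n w \<le> 1" using Zb_range[OF that(2)] by auto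
    have a: "0 \<le> 1 - \<alpha>" "0 \<le> \<alpha>" using \<alpha> by auto
    show "0 \<le> (1 - \<alpha>) * Z n j w + \<alpha> * Zbar n w"
      using z zb a by (intro add_nonneg_nonneg mult_nonneg_nonneg) auto
    have "(1 - \<alpha>) * Z n j w + \<alpha> * Zbar n w \<le> (1 - \<alpha>) * 1 + \<alpha> * 1"
      using z zb a by (intro add_mono mult_left_mono) auto
    then show "(1 - \<alpha>) * Z n j w + \<alpha> * Zbar n w \<le> 1" by simp
  qed
  have h_bnd: "\<bar>h n j w\<bar> \<le> 1" if "j \<in> {1..N}" "w \<in> space M" for n j w
  proof -
    have "0 \<le> (1 - \<alpha>) * Z n j w + \<alpha> * Zbar n w" "(1 - \<alpha>) * Z n j w + \<alpha> * Zbar n w \<le> 1"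
      using brr[OF that] by auto
    then show ?thesis using I_range[OF that, of "Suc n"] by (auto simp: h_def)
  qed
  have hM: "h n j \<in> borel_measurable M" if "j \<in> {1..N}" for n j
    unfolding h_def using I_meas[OF that] Z_meas[OF that] by measurable
  have h_orth: "(\<integral>w. g w * h n j w \<partial>M) = 0"
    if j: "j \<in> {1..N}" and g: "g \<in> borel_measurable (F n)" and gb: "\<And>w. w \<in> space M \<Longrightarrow> \<bar>g w\<bar> \<le> B"
    for n j g B
  proof -
    interpret sigma_finite_subalgebra M "F n" by (rule sfs)
    have gM[measurable]: "g \<in> borel_measurable M" by (rule measurable_from_subalg[OF subF g])
    define A where "A = {w \<in> space M. I (Suc n) j w = 1}"
    have AM: "A \<in> sets M" unfolding A_def using I_meas[OF j] by measurable
    have B0: "0 \<le> B" using gb not_empty by (meson abs_ge_zero ex_in_conv order_trans)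
    have IA: "I (Suc n) j w = indicator A w" if "w \<in> space M" for w
      using I_range[OF j that, of "Suc n"] that by (auto simp: A_def indicator_def)
    define br where "br w = (1 - \<alpha>) * Z n j w + \<alpha> * Zbar n w" for w
    have brM[measurable]: "br \<in> borel_measurable M" unfolding br_def using Z_meas[OF j] by measurable
    have iGA: "integrable M (\<lambda>w. g w * indicator A w)"
      by (rule bint[where B=B]) (use AM in simp, auto simp: indicator_def abs_mult intro: gb B0)
    have "(\<integral>w. g w * I (Suc n) j w \<partial>M) = (\<integral>w. g w * indicator A w \<partial>M)"
      by (rule Bochner_Integration.integral_cong) (auto simp: IA)
    also have "\<dots> = (\<integral>w. g w * real_cond_exp M (F n) (indicator A) w \<partial>M)"
      by (rule real_cond_exp_intg(2)[symmetric, OF iGA g]) (use AM in simp)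
    also have "\<dots> = (\<integral>w. g w * br w \<partial>M)"
    proof (rule integral_cong_AE)
      show "AE w in M. g w * real_cond_exp M (F n) (indicator A) w = g w * br w"
        using I_cond_prob_given[OF j, of n] by (rule AE_mp) (auto simp: cond_prob_given_def A_def br_def)
    qed simp_all
    finally have e1: "(\<integral>w. g w * I (Suc n) j w \<partial>M) = (\<integral>w. g w * br w \<partial>M)" .
    have i1: "integrable M (\<lambda>w. g w * I (Suc n) j w)"
    proof (rule bint[where B=B])
      show "(\<lambda>w. g w * I (Suc n) j w) \<in> borel_measurable M" using I_meas[OF j] by simp
      fix w assume w: "w \<in> space M"
      have "\<bar>I (Suc n) j w\<bar> \<le> 1" using I_range[OF j w, of "Suc n"] by auto
      then have "\<bar>g w\<bar> * \<bar>I (Suc n) j w\<bar> \<le> B * 1" by (intro mult_mono gb w) (use B0 in auto)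
      then show "\<bar>g w * I (Suc n) j w\<bar> \<le> B" by (simp add: abs_mult)
    qed
    have i2: "integrable M (\<lambda>w. g w * br w)"
    proof (rule bint[where B="B * 2"])
      fix w assume w: "w \<in> space M"
      have "\<bar>br w\<bar> \<le> 2" using brr[OF j w, of n] unfolding br_def by auto
      then show "\<bar>g w * br w\<bar> \<le> B * 2" unfolding abs_mult using gb[OF w] B0 by (intro mult_mono) auto
    qed simp
    have "(\<integral>w. g w * h n j w \<partial>M) = (\<integral>w. g w * I (Suc n) j w - g w * br w \<partial>M)"
      by (rule Bochner_Integration.integral_cong) (auto simp: h_def br_def algebra_simps)
    also have "\<dots> = 0" using i1 i2 e1 by simp
    finally show ?thesis .
  qed
  have part1: "AE w in M. (\<lambda>n. Z n i w - Zbar n w) \<longlonglongrightarrow> 0" if i: "i \<in> {1..N}" for i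
  proof -
    define D where "D n w = Z n i w - Zbar n w" for n w
    define xx where "xx n w = D (Suc n) w - (1 - c * r n) * D n w" for n w
    have xx_id: "xx n w = r n * \<rho> * (h n i w - (1 / real N) * (\<Sum>j=1..N. h n j w))"
      if w: "w \<in> space M" for n w
      unfolding havg unfolding xx_def D_def ZbS[OF w] recursion[OF i w] h_def c_def by (simp add: algebra_simps)
    have xxF: "xx n \<in> borel_measurable (F (Suc n))" for n
      unfolding xx_def D_def
      by (intro borel_measurable_diff borel_measurable_times borel_measurable_const ZF ZbF i) auto
    have xx_bnd: "\<bar>xx n w\<bar> \<le> 2 * r n" if w: "w \<in> space M" for n w
    proof -
      have s: "\<bar>\<Sum>j=1..N. h n j w\<bar> \<le> real N"
        using order_trans[OF sum_abs sum_mono[of "{1..N}" "\<lambda>j. \<bar>h n j w\<bar>" "\<lambda>_. 1"]] h_bnd[OF _ w] by simp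
      have "\<bar>(1 / real N) * (\<Sum>j=1..N. h n j w)\<bar> \<le> 1"
        using s Npos by (simp add: abs_mult field_simps)
      then have "\<bar>h n i w - (1 / real N) * (\<Sum>j=1..N. h n j w)\<bar> \<le> 2"
        using h_bnd[OF i w, of n] by linarith
      moreover have "\<bar>r n * \<rho>\<bar> \<le> r n" using r(1)[of n] \<rho> by (simp add: abs_mult mult_left_le)
      ultimately have "\<bar>r n * \<rho>\<bar> * \<bar>h n i w - (1 / real N) * (\<Sum>j=1..N. h n j w)\<bar> \<le> r n * 2"
        by (intro mult_mono) auto
      then show ?thesis unfolding xx_id[OF w] by (simp add: abs_mult mult.commute)
    qed
    have orth: "(\<integral>w. g w * xx n w \<partial>M) = 0"
      if g: "g \<in> borel_measurable (F n)" and gb: "\<And>w. w \<in> space M \<Longrightarrow> \<bar>g w\<bar> \<le> B" for n g B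
    proof -
      have gM[measurable]: "g \<in> borel_measurable M" by (rule measurable_from_subalg[OF subF g])
      have B0: "0 \<le> B" using gb not_empty by (meson abs_ge_zero ex_in_conv order_trans)
      have ih: "integrable M (\<lambda>w. g w * h n j w)" if "j \<in> {1..N}" for j
      proof (rule bint[where B=B])
        show "(\<lambda>w. g w * h n j w) \<in> borel_measurable M" using hM[OF that] by simp
        fix w assume w: "w \<in> space M"
        have "\<bar>g w\<bar> * \<bar>h n j w\<bar> \<le> B * 1" by (intro mult_mono gb w h_bnd that) (use B0 in auto)
        then show "\<bar>g w * h n j w\<bar> \<le> B" by (simp add: abs_mult)
      qed
      have "(\<integral>w. g w * xx n w \<partial>M) = (\<integral>w. r n * \<rho> * (g w * h n i w) - r n * \<rho> / real N * (\<Sum>j=1..N. g w * h n j w) \<partial>M)"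
        by (rule Bochner_Integration.integral_cong) (auto simp: xx_id sum_distrib_left algebra_simps)
      also have "\<dots> = r n * \<rho> * (\<integral>w. g w * h n i w \<partial>M) - r n * \<rho> / real N * (\<Sum>j=1..N. \<integral>w. g w * h n j w \<partial>M)"
      proof -
        have isum: "integrable M (\<lambda>w. \<Sum>j=1..N. g w * h n j w)"
          by (rule Bochner_Integration.integrable_sum) (use ih in auto)
        have "(\<integral>w. r n * \<rho> * (g w * h n i w) - r n * \<rho> / real N * (\<Sum>j=1..N. g w * h n j w) \<partial>M)
            = (\<integral>w. r n * \<rho> * (g w * h n i w) \<partial>M) - (\<integral>w. r n * \<rho> / real N * (\<Sum>j=1..N. g w * h n j w) \<partial>M)"
          by (rule Bochner_Integration.integral_diff) (use ih[OF i] isum in auto)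
        also have "\<dots> = r n * \<rho> * (\<integral>w. g w * h n i w \<partial>M) - r n * \<rho> / real N * (\<integral>w. (\<Sum>j=1..N. g w * h n j w) \<partial>M)"
          by simp
        also have "(\<integral>w. (\<Sum>j=1..N. g w * h n j w) \<partial>M) = (\<Sum>j=1..N. \<integral>w. g w * h n j w \<partial>M)"
          by (rule Bochner_Integration.integral_sum) (use ih in auto)
        finally show ?thesis .
      qed
      also have "\<dots> = 0" using h_orth[OF _ g gb] i by simp
      finally show ?thesis .
    qed
    have "AE w in M. summable (\<lambda>n. xx n w)"
    proof (rule as_summable[where G=F and b="\<lambda>n. 2 * r n"])
      show "prob_space M" by (rule M)
      show "\<And>n. subalgebra M (F n)" by (rule subF)
      show "\<And>n m. n \<le> m \<Longrightarrow> subalgebra (F m) (F n)" by (rule monoF)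
      show "\<And>n. xx n \<in> borel_measurable (F (Suc n))" by (rule xxF)
      show "\<And>n w. w \<in> space M \<Longrightarrow> \<bar>xx n w\<bar> \<le> 2 * r n" by (rule xx_bnd)
      show "\<And>n g B. g \<in> borel_measurable (F n) \<Longrightarrow> (\<And>w. w \<in> space M \<Longrightarrow> \<bar>g w\<bar> \<le> B)
                 \<Longrightarrow> (\<integral>w. g w * xx n w \<partial>M) = 0" by (rule orth)
      show "summable (\<lambda>n. (2 * r n)\<^sup>2)" using summable_mult[OF r_sq, of 4] by (simp add: power_mult_distrib)
    qed
    then show ?thesis
    proof (rule AE_mp, intro AE_I2 impI)
      fix w assume sw: "summable (\<lambda>n. xx n w)"
      have "(\<lambda>n. D n w) \<longlonglongrightarrow> 0"
      proof (rule det_conv2[where a="\<lambda>n. c * r n" and x="\<lambda>n. xx n w"])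
        show "summable (\<lambda>n. xx n w)" by (rule sw)
      next
        show "filterlim (\<lambda>n. \<Sum>k<n. c * r k) at_top sequentially"
          unfolding sum_distrib_left[symmetric]
          by (rule filterlim_tendsto_pos_mult_at_top[OF tendsto_const c(1) r_div])
      next
        fix n show "0 \<le> c * r n" using c r(1)[of n] by simp
      next
        fix n show "c * r n \<le> 1" using mult_mono[OF c(2) less_imp_le[OF r(2)[of n]]] c r(1)[of n] by simp
      next
        fix n show "D (Suc n) w = (1 - c * r n) * D n w + xx n w" by (simp add: xx_def)
      qed
      then show "(\<lambda>n. Z n i w - Zbar n w) \<longlonglongrightarrow> 0" by (simp add: D_def)
    qed
  qed
  show ?thesis
  proof (intro conjI ballI allI impI)
    fix i assume "i \<in> {1..N}" then show "AE w in M. (\<lambda>n. Z n i w - Zbar n w) \<longlonglongrightarrow> 0" by (rule part1)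
  next
    fix Zlim :: "'a \<Rightarrow> real" and i
    assume L: "AE w in M. (\<lambda>n. Zbar n w) \<longlonglongrightarrow> Zlim w" and i: "i \<in> {1..N}"
    show "AE w in M. (\<lambda>n. Z n i w) \<longlonglongrightarrow> Zlim w"
      using part1[OF i] L
    proof (eventually_elim)
      case (elim w)
      then have "(\<lambda>n. (Z n i w - Zbar n w) + Zbar n w) \<longlonglongrightarrow> 0 + Zlim w" by (intro tendsto_add)
      then show ?case by simp
    qed
  qed
qed

end
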